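(* Let $n\ge 1$ and let $s,t$ be nonnegative integers. Two players independently each open one cereal box per time step; each box contains one of $n$ coupon types, chosen uniformly at random and independently of everything else. The first player is currently missing $s$ of the $n$ coupon types and the second player is missing $t$ of them. Let $X_1(s)$ and $X_2(t)$ be the number of boxes the first, respectively second, player must open until they have all $n$ coupon types, and let $$M(s,t):=\mathbb{E}\left[\max\{X_1(s),X_2(t)\}\right].$$ Equivalently, $M$ is determined by $M(0,0)=0$, $M(s,t)=0$ if $s<0$ or $t<0$, and the recurrence $$M(s,t)=\tfrac{s}{n}\left(1-\tfrac{t}{n}\right)M(s-1,t)+\left(1-\tfrac{s}{n}\right)\tfrac{t}{n}M(s,t-1)+\tfrac{s}{n}\cdot\tfrac{t}{n}M(s-1,t-1)+\left(1-\tfrac{s}{n}\right)\left(1-\tfrac{t}{n}\right)M(s,t)+1.$$ Then $$M(s,t)=nH(s+t)-\frac{\left(H(s+t)-1\right)st}{(s+t)(s+t-1)}+o(1).$$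
   Context: $H(m)=\sum_{j=1}^m \frac1j$ denotes the $m$-th harmonic number. The term $o(1)$ denotes a quantity tending to $0$ as $n\to\infty$ with $s,t$ fixed. *)

theory Defs
  imports "HOL-Analysis.Analysis"
begin

text \<open>The function M is indexed by
  integers so that the boundary convention M(s,t) = 0 for s < 0 or t < 0 is literal.\<close>

definition coupon_rec :: "nat \<Rightarrow> (int \<Rightarrow> int \<Rightarrow> real) \<Rightarrow> bool" where
  "coupon_rec n M \<longleftrightarrow>
     M 0 0 = 0 \<and>
     (\<forall>s t. s < 0 \<or> t < 0 \<longrightarrow> M s t = 0) \<and>
     (\<forall>s t. 0 \<le> s \<and> s \<le> int n \<and> 0 \<le> t \<and> t \<le> int n \<and> (s, t) \<noteq> (0, 0) \<longrightarrow>
        M s t = (of_int s / real n) * (1 - of_int t / real n) * M (s - 1) t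
              + (1 - of_int s / real n) * (of_int t / real n) * M s (t - 1)
              + (of_int s / real n) * (of_int t / real n) * M (s - 1) (t - 1)
              + (1 - of_int s / real n) * (1 - of_int t / real n) * M s t
              + 1)"

end

theory Submission
  imports Defs
begin

lemma alg:
  fixes n s t m m1 m2 m3 H H1 H2 B B1 B2 B3 :: real
  assumes n: "n > 0"
    and rec: "m = s/n*(1-t/n)*m1 + (1-s/n)*(t/n)*m2 + s/n*(t/n)*m3 + (1-s/n)*(1-t/n)*m + 1"
    and hk: "(s+t)*H = (s+t)*H1 + 1"
    and bid: "(s+t)*B - s*t*H = s*B1 + t*B2 - s*t*(2*H1 - H2)"
  shows "(s+t - s*t/n)*(m - (n*H + B)) = s*(m1 - (n*H1 + B1)) + t*(m2 - (n*H1 + B2))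
          + s*t/n*(B + (m3 - (n*H2+B3)) + B3 - (m1 - (n*H1+B1)) - B1 - (m2 - (n*H1+B2)) - B2)"
proof -
  have e1: "(s+t - s*t/n)*m - (s*(1-t/n)*m1 + t*(1-s/n)*m2 + s*t/n*m3 + n)
     = n * (m - (s/n*(1-t/n)*m1 + (1-s/n)*(t/n)*m2 + s/n*(t/n)*m3 + (1-s/n)*(1-t/n)*m + 1))"
    using n by (simp add: field_simps)
  have rec': "(s+t - s*t/n)*m = s*(1-t/n)*m1 + t*(1-s/n)*m2 + s*t/n*m3 + n"
    using e1 rec by simp
  have e2: "(s+t - s*t/n)*(m - (n*H + B)) - (s*(m1 - (n*H1 + B1)) + t*(m2 - (n*H1 + B2))
          + s*t/n*(B + (m3 - (n*H2+B3)) + B3 - (m1 - (n*H1+B1)) - B1 - (m2 - (n*H1+B2)) - B2))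
      = ((s+t - s*t/n)*m - (s*(1-t/n)*m1 + t*(1-s/n)*m2 + s*t/n*m3 + n))
        - n * ((s+t)*H - ((s+t)*H1 + 1)) - (((s+t)*B - s*t*H) - (s*B1 + t*B2 - s*t*(2*H1 - H2)))"
    using n by (simp add: field_simps)
  show ?thesis using e2 rec' hk bid by simp
qed

definition Bf :: "nat \<Rightarrow> nat \<Rightarrow> real" where
  "Bf s t = -((harm (s+t) - 1) * real s * real t / ((real s + real t) * (real s + real t - 1)))"

lemma Bf0 [simp]: "Bf 0 t = 0" "Bf s 0 = 0" by (simp_all add: Bf_def)

lemma bid_poly:
  fixes x y h d p q r :: real
  assumes "y = d - x" "p*(d+1) = 1" "q*(d+2) = 1" "r*d = 1"
  shows "(d+2) * (-((h + p + q - 1)*(x+1)*(y+1)*(q*p)))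
     - (x+1)*(y+1)*(h + p + q)
   = (x+1) * (-((h + p - 1)*x*(y+1)*(p*r)))
     + (y+1) * (-((h + p - 1)*(x+1)*y*(p*r)))
     - (x+1)*(y+1)*(2*(h + p) - h)"
  using assms by algebra

lemma Bid_Suc:
  "(real (Suc a) + real (Suc b)) * Bf (Suc a) (Suc b) - real (Suc a) * real (Suc b) * harm (Suc a + Suc b)
   = real (Suc a) * Bf a (Suc b) + real (Suc b) * Bf (Suc a) b
     - real (Suc a) * real (Suc b) * (2 * harm (Suc a + Suc b - 1) - harm (Suc a + Suc b - 2))"
proof (cases "a + b = 0")
  case True
  then have "a = 0" "b = 0" by auto
  then show ?thesis by (simp add: Bf_def harm_Suc harm_expand)
next
  case False
  define x where "x = real a"
  define y where "y = real b"
  define d where "d = x + y"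
  define h where "h = (harm (a + b) :: real)"
  define p where "p = 1 / (d + 1)"
  define q where "q = 1 / (d + 2)"
  define r where "r = 1 / d"
  have dpos: "d > 0" using False unfolding d_def x_def y_def by (cases a) auto
  have pp: "p*(d+1) = 1" unfolding p_def using dpos by simp
  have qq: "q*(d+2) = 1" unfolding q_def using dpos by simp
  have rr: "r*d = 1" unfolding r_def using dpos by simp
  have yd: "y = d - x" unfolding d_def by simp
  have h1: "harm (a + Suc b) = h + p"
    unfolding h_def p_def d_def x_def y_def by (simp add: harm_Suc field_simps)
  have h2: "harm (Suc a + Suc b) = h + p + q"
  proof -
    have "harm (Suc a + Suc b) = harm (a + Suc b) + 1 / (d + 2)"
      unfolding d_def x_def y_def by (simp add: harm_Suc field_simps)
    then show ?thesis using h1 q_def by simp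
  qed
  have h1': "harm (Suc a + b) = h + p" using h1 by simp
  have i1: "Suc a + Suc b - 1 = a + Suc b" "Suc a + Suc b - 2 = a + b" by simp_all
  have B1: "Bf (Suc a) (Suc b) = -((h + p + q - 1)*(x+1)*(y+1)*(q*p))"
  proof -
    have "(real (Suc a) + real (Suc b)) * (real (Suc a) + real (Suc b) - 1) = (d+2)*(d+1)"
      unfolding d_def x_def y_def by (simp add: algebra_simps)
    then show ?thesis unfolding Bf_def h2 q_def p_def x_def y_def by (simp add: add.commute)
  qed
  have B2: "Bf a (Suc b) = -((h + p - 1)*x*(y+1)*(p*r))"
  proof -
    have "(real a + real (Suc b)) * (real a + real (Suc b) - 1) = (d+1)*d"
      unfolding d_def x_def y_def by (simp add: algebra_simps)
    then show ?thesis unfolding Bf_def h1 r_def p_def x_def y_def by simp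
  qed
  have B3: "Bf (Suc a) b = -((h + p - 1)*(x+1)*y*(p*r))"
  proof -
    have "(real (Suc a) + real b) * (real (Suc a) + real b - 1) = (d+1)*d"
      unfolding d_def x_def y_def by (simp add: algebra_simps)
    then show ?thesis unfolding Bf_def h1' r_def p_def x_def y_def by simp
  qed
  have e: "real (Suc a) + real (Suc b) = d + 2" "real (Suc a) = x + 1" "real (Suc b) = y + 1"
    unfolding d_def x_def y_def by simp_all
  show ?thesis unfolding B1 B2 B3 e i1 h1 h2 h_def[symmetric]
    using bid_poly[OF yd pp qq rr, of h] unfolding d_def by (simp add: add_ac)
qed

lemma Bid:
  assumes "s + t \<ge> 1"
  shows "(real s + real t) * Bf s t - real s * real t * harm (s + t)
   = real s * Bf (s - 1) t + real t * Bf s (t - 1)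
     - real s * real t * (2 * harm (s + t - 1) - harm (s + t - 2))"
proof (cases "s = 0 \<or> t = 0")
  case True then show ?thesis by auto
next
  case False
  then obtain a b where "s = Suc a" "t = Suc b" by (meson not0_implies_Suc)
  then show ?thesis using Bid_Suc[of a b] by simp
qed

lemma hk:
  assumes "s + t \<ge> 1"
  shows "(real s + real t) * harm (s + t) = (real s + real t) * harm (s + t - 1) + 1"
proof -
  define k where "k = s + t - 1"
  have k: "s + t = Suc k" using assms unfolding k_def by simp
  have "real s + real t = real (Suc k)" using k by (metis of_nat_add)
  then show ?thesis using k by (simp add: harm_Suc field_simps)
qed

theorem mainTheorem1:
  fixes M :: "nat \<Rightarrow> int \<Rightarrow> int \<Rightarrow> real" and s t :: nat
  assumes "\<And>n. n \<ge> 1 \<Longrightarrow> coupon_rec n (M n)"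
  shows "(\<lambda>n. M n (int s) (int t)
            - (real n * harm (s + t)
               - (harm (s + t) - 1) * real s * real t
                 / ((real s + real t) * (real s + real t - 1))))
         \<longlonglongrightarrow> 0"
proof -
  define E where "E n s t = M n (int s) (int t) - (real n * harm (s+t) + Bf s t)" for n s t
  have rec: "M n (int s) (int t) = (of_int (int s) / real n) * (1 - of_int (int t) / real n) * M n (int s - 1) (int t)
              + (1 - of_int (int s) / real n) * (of_int (int t) / real n) * M n (int s) (int t - 1)
              + (of_int (int s) / real n) * (of_int (int t) / real n) * M n (int s - 1) (int t - 1)
              + (1 - of_int (int s) / real n) * (1 - of_int (int t) / real n) * M n (int s) (int t)
              + 1" if "n \<ge> 1" "s \<le> n" "t \<le> n" "s + t \<ge> 1" for n s t
  proof -
    have "coupon_rec n (M n)" using assms that by auto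
    then have H: "\<forall>s t. 0 \<le> s \<and> s \<le> int n \<and> 0 \<le> t \<and> t \<le> int n \<and> (s, t) \<noteq> (0, 0) \<longrightarrow>
        M n s t = (of_int s / real n) * (1 - of_int t / real n) * M n (s - 1) t
              + (1 - of_int s / real n) * (of_int t / real n) * M n s (t - 1)
              + (of_int s / real n) * (of_int t / real n) * M n (s - 1) (t - 1)
              + (1 - of_int s / real n) * (1 - of_int t / real n) * M n s t
              + 1" unfolding coupon_rec_def by blast
    show ?thesis by (rule H[rule_format]) (use that in auto)
  qed
  have main: "(\<lambda>n. E n s t) \<longlonglongrightarrow> 0" for s t
  proof (induction "s + t" arbitrary: s t rule: less_induct)
    case less
    show ?case
    proof (cases "s + t = 0")
      case True
      then have "s = 0" "t = 0" by auto
      have "\<forall>\<^sub>F n in sequentially. E n s t = 0"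
        using eventually_ge_at_top[of 1]
      proof eventually_elim
        case (elim n)
        then show ?case using assms[OF elim] \<open>s = 0\<close> \<open>t = 0\<close>
          by (simp add: E_def coupon_rec_def harm_expand)
      qed
      then show ?thesis by (simp add: tendsto_eventually)
    next
      case False
      then have st1: "s + t \<ge> 1" by linarith
      define k where "k = real s + real t"
      define c where "c = real s * real t"
      have kpos: "k > 0" using False unfolding k_def by (cases s) auto
      define Y where "Y n = Bf s t + (M n (int s - 1) (int t - 1) - (real n * harm (s+t-2) + Bf (s-1) (t-1))) + Bf (s-1) (t-1)
          - (M n (int s - 1) (int t) - (real n * harm (s+t-1) + Bf (s-1) t)) - Bf (s-1) t
          - (M n (int s) (int t - 1) - (real n * harm (s+t-1) + Bf s (t-1))) - Bf s (t-1)" for n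
      define R where "R n = real s * (M n (int s - 1) (int t) - (real n * harm (s+t-1) + Bf (s-1) t))
          + real t * (M n (int s) (int t - 1) - (real n * harm (s+t-1) + Bf s (t-1)))
          + c / real n * Y n" for n
      have eq: "\<forall>\<^sub>F n in sequentially. E n s t = R n / (k - c / real n)"
        using eventually_ge_at_top[of "max 1 (max s t) + 1"]
      proof eventually_elim
        case (elim n)
        then have n1: "n \<ge> 1" "s \<le> n" "t \<le> n" "s < n" by auto
        have "(real s + real t - real s * real t / real n) * (M n (int s) (int t) - (real n * harm (s+t) + Bf s t)) = R n"
          unfolding R_def Y_def c_def
          by (rule alg) (use n1 rec[OF n1(1-3) st1] hk[OF st1] Bid[OF st1] in auto)
        moreover have "k - c / real n > 0"
        proof (cases "s = 0")
          case True
          then show ?thesis using kpos by (simp add: c_def)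
        next
          case False
          have "real s * real t \<le> real n * real t" using n1 by (intro mult_right_mono) auto
          then have "c / real n \<le> real t" unfolding c_def using n1
            by (simp add: divide_le_eq mult.commute)
          moreover have "real s > 0" using False by simp
          ultimately show ?thesis unfolding k_def by linarith
        qed
        ultimately have "(k - c / real n) * E n s t = R n" "k - c / real n \<noteq> 0"
          unfolding E_def k_def c_def by auto
        then show ?case by (simp add: eq_divide_eq mult.commute)
      qed
      have lim1: "(\<lambda>n. real s * (M n (int s - 1) (int t) - (real n * harm (s+t-1) + Bf (s-1) t))) \<longlonglongrightarrow> 0"
      proof (cases "s = 0")
        case False
        have "(\<lambda>n. E n (s-1) t) \<longlonglongrightarrow> 0" using less[of "s-1" t] False by simp
        from tendsto_mult[OF tendsto_const this, of "real s"]
        have "(\<lambda>n. real s * E n (s-1) t) \<longlonglongrightarrow> 0" by simp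
        moreover have e1: "int s - 1 = int (s - 1)" and e2: "s - 1 + t = s + t - 1" using False by auto
        ultimately show ?thesis unfolding E_def e1[symmetric] e2 by blast
      qed simp
      have lim2: "(\<lambda>n. real t * (M n (int s) (int t - 1) - (real n * harm (s+t-1) + Bf s (t-1)))) \<longlonglongrightarrow> 0"
      proof (cases "t = 0")
        case False
        have "(\<lambda>n. E n s (t-1)) \<longlonglongrightarrow> 0" using less[of s "t-1"] False by simp
        from tendsto_mult[OF tendsto_const this, of "real t"]
        have "(\<lambda>n. real t * E n s (t-1)) \<longlonglongrightarrow> 0" by simp
        moreover have e1: "int t - 1 = int (t - 1)" and e2: "s + (t - 1) = s + t - 1" using False by auto
        ultimately show ?thesis unfolding E_def e1[symmetric] e2 by blast
      qed simp
      have lim3: "(\<lambda>n. c / real n * Y n) \<longlonglongrightarrow> 0"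
      proof (cases "s = 0 \<or> t = 0")
        case True then show ?thesis by (auto simp: c_def)
      next
        case False
        have a1: "(\<lambda>n. E n (s-1) t) \<longlonglongrightarrow> 0" using less[of "s-1" t] False by simp
        have a2: "(\<lambda>n. E n s (t-1)) \<longlonglongrightarrow> 0" using less[of s "t-1"] False by simp
        have a3: "(\<lambda>n. E n (s-1) (t-1)) \<longlonglongrightarrow> 0" using less[of "s-1" "t-1"] False by simp
        have i: "int s - 1 = int (s - 1)" "int t - 1 = int (t - 1)" "s - 1 + t = s + t - 1"
          "s + (t - 1) = s + t - 1" "s - 1 + (t - 1) = s + t - 2" using False by auto
        have Yeq: "Y n = Bf s t + E n (s-1) (t-1) + Bf (s-1) (t-1) - E n (s-1) t - Bf (s-1) t
               - E n s (t-1) - Bf s (t-1)" for n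
          unfolding Y_def E_def i by simp
        have "Y \<longlonglongrightarrow> Bf s t + 0 + Bf (s-1) (t-1) - 0 - Bf (s-1) t - 0 - Bf s (t-1)"
          unfolding Yeq by (intro tendsto_intros a1 a2 a3)
        moreover have "(\<lambda>n. c / real n) \<longlonglongrightarrow> 0"
          by (intro tendsto_divide_0[OF tendsto_const] filterlim_at_top_imp_at_infinity[OF filterlim_real_sequentially])
        ultimately have "(\<lambda>n. c / real n * Y n) \<longlonglongrightarrow> 0 * (Bf s t + 0 + Bf (s-1) (t-1) - 0 - Bf (s-1) t - 0 - Bf s (t-1))"
          by (rule tendsto_mult[rotated])
        then show ?thesis by simp
      qed
      have "R \<longlonglongrightarrow> 0"
        using tendsto_add[OF tendsto_add[OF lim1 lim2] lim3] unfolding R_def by simp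
      moreover have "(\<lambda>n. k - c / real n) \<longlonglongrightarrow> k - 0"
        by (intro tendsto_intros tendsto_divide_0[OF tendsto_const] filterlim_at_top_imp_at_infinity[OF filterlim_real_sequentially])
      ultimately have "(\<lambda>n. R n / (k - c / real n)) \<longlonglongrightarrow> 0 / (k - 0)"
        using kpos by (intro tendsto_divide) auto
      then have "(\<lambda>n. R n / (k - c / real n)) \<longlonglongrightarrow> 0" by simp
      then show ?thesis using eq by (simp add: tendsto_cong)
    qed
  qed
  show ?thesis using main[of s t] unfolding E_def Bf_def by (simp add: algebra_simps)
qed

end
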